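(* Let $A\in\mathbb{R}^{m\times n}$ be semi-monotone (i.e. $A^{\dagger}\geq 0$). Let $A=B-C$ be a proper weak regular splitting and $A=U-V$ a proper regular splitting of $A$. If $A\geq 0$ and $B^{\dagger}\geq U^{\dagger}$, then $$\rho(B^{\dagger}C)\leq \rho(U^{\dagger}V)<1.$$
   Context: All matrices are real. $X^{\dagger}$ denotes the Moore–Penrose inverse of $X$, and $\rho(\cdot)$ the spectral radius. For a matrix $X$, $X\geq 0$ means that all entries of $X$ are nonnegative and at least one entry is positive; $X\geq Y$ means $X-Y\geq 0$. $R(X)$ and $N(X)$ denote range and null space. A splitting $A=U-V$ is proper if $R(U)=R(A)$ and $N(U)=N(A)$. It is a proper regular splitting if it is proper, $U^{\dagger}\geq 0$ and $V\geq 0$; it is a proper weak regular splitting if it is proper, $U^{\dagger}\geq 0$ and $U^{\dagger}V\geq 0$. *)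

theory Defs
  imports "Jordan_Normal_Form.Spectral_Radius"
begin

definition mp_inverse :: "real mat \<Rightarrow> real mat" where
  "mp_inverse X = (THE Y. Y \<in> carrier_mat (dim_col X) (dim_row X) \<and>
      X * Y * X = X \<and> Y * X * Y = Y \<and>
      transpose_mat (X * Y) = X * Y \<and> transpose_mat (Y * X) = Y * X)"

(* X \<ge> 0 in the paper's sense: all entries nonnegative and at least one positive *)
definition mat_nonneg :: "real mat \<Rightarrow> bool" where
  "mat_nonneg X \<longleftrightarrow> (\<forall>i<dim_row X. \<forall>j<dim_col X. X $$ (i,j) \<ge> 0) \<and>
      (\<exists>i<dim_row X. \<exists>j<dim_col X. X $$ (i,j) > 0)"

definition mat_geq :: "real mat \<Rightarrow> real mat \<Rightarrow> bool" where
  "mat_geq X Y \<longleftrightarrow> mat_nonneg (X - Y)"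

definition range_mat :: "real mat \<Rightarrow> real vec set" where
  "range_mat X = {X *\<^sub>v x | x. x \<in> carrier_vec (dim_col X)}"

definition null_mat :: "real mat \<Rightarrow> real vec set" where
  "null_mat X = {x \<in> carrier_vec (dim_col X). X *\<^sub>v x = 0\<^sub>v (dim_row X)}"

definition proper_splitting :: "real mat \<Rightarrow> real mat \<Rightarrow> real mat \<Rightarrow> bool" where
  "proper_splitting A U V \<longleftrightarrow>
     U \<in> carrier_mat (dim_row A) (dim_col A) \<and> V \<in> carrier_mat (dim_row A) (dim_col A) \<and>
     A = U - V \<and> range_mat U = range_mat A \<and> null_mat U = null_mat A"

definition proper_regular_splitting :: "real mat \<Rightarrow> real mat \<Rightarrow> real mat \<Rightarrow> bool" where
  "proper_regular_splitting A U V \<longleftrightarrow>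
     proper_splitting A U V \<and> mat_nonneg (mp_inverse U) \<and> mat_nonneg V"

definition proper_weak_regular_splitting :: "real mat \<Rightarrow> real mat \<Rightarrow> real mat \<Rightarrow> bool" where
  "proper_weak_regular_splitting A U V \<longleftrightarrow>
     proper_splitting A U V \<and> mat_nonneg (mp_inverse U) \<and> mat_nonneg (mp_inverse U * V)"

definition rho :: "real mat \<Rightarrow> real" where
  "rho X = spectral_radius (map_mat complex_of_real X)"

end

theory Submission
  imports Defs
begin


lemma mult_unit_index:
  fixes A :: "'a :: semiring_1 mat"
  assumes A: "A \<in> carrier_mat nr nc" and i: "i < nr" and j: "j < nc"
  shows "(A *\<^sub>v unit_vec nc j) $ i = A $$ (i,j)"
  using A i j by (simp add: row_def)

lemma mat_eq_by_vec:
  fixes A :: "'a :: semiring_1 mat"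
  assumes A: "A \<in> carrier_mat nr nc" and B: "B \<in> carrier_mat nr nc"
    and eq: "\<And>x. x \<in> carrier_vec nc \<Longrightarrow> A *\<^sub>v x = B *\<^sub>v x"
  shows "A = B"
proof (rule eq_matI)
  fix i j assume i: "i < dim_row B" and j: "j < dim_col B"
  have "A $$ (i,j) = (A *\<^sub>v unit_vec nc j) $ i" using mult_unit_index[OF A] i j B by auto
  also have "\<dots> = (B *\<^sub>v unit_vec nc j) $ i" using eq[of "unit_vec nc j"] by simp
  also have "\<dots> = B $$ (i,j)" using mult_unit_index[OF B] i j B by auto
  finally show "A $$ (i,j) = B $$ (i,j)" .
qed (use A B in auto)

lemma sym_mat_scalar:
  fixes E :: "real mat"
  assumes E: "E \<in> carrier_mat m m" and sym: "transpose_mat E = E"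
    and x: "x \<in> carrier_vec m" and y: "y \<in> carrier_vec m"
  shows "(E *\<^sub>v y) \<bullet> x = y \<bullet> (E *\<^sub>v x)"
  using transpose_vec_mult_scalar[OF E x y] sym by simp

lemma self_scalar_pos:
  fixes c :: "real vec"
  assumes c: "c \<in> carrier_vec m" and nz: "c \<noteq> 0\<^sub>v m"
  shows "c \<bullet> c > 0"
proof -
  from nz c obtain i where i: "i < m" and ci: "c $ i \<noteq> 0" by (auto simp: vec_eq_iff)
  have "c \<bullet> c = (\<Sum>j\<in>{0..<m}. c $ j * c $ j)" using c by (simp add: scalar_prod_def)
  also have "\<dots> \<ge> c $ i * c $ i"
    by (rule member_le_sum, insert i, auto)
  finally show ?thesis using ci by (smt (verit) not_real_square_gt_zero)
qed

lemma smult_mat_mult_mat_vec_assoc: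
  fixes A :: "real mat"
  assumes A: "A \<in> carrier_mat nr nc" and y: "y \<in> carrier_vec nc"
  shows "(a \<cdot>\<^sub>m A) *\<^sub>v y = a \<cdot>\<^sub>v (A *\<^sub>v y)"
  by (rule eq_vecI, insert A y, auto simp: scalar_prod_def sum_distrib_left mult.assoc)

definition outer :: "real vec \<Rightarrow> real mat" where
  "outer c = mat (dim_vec c) (dim_vec c) (\<lambda>(i,j). c $ i * c $ j)"

lemma outer_carrier[simp]: "c \<in> carrier_vec m \<Longrightarrow> outer c \<in> carrier_mat m m"
  by (auto simp: outer_def)

lemma outer_mult:
  assumes c: "c \<in> carrier_vec m" and y: "y \<in> carrier_vec m"
  shows "outer c *\<^sub>v y = (c \<bullet> y) \<cdot>\<^sub>v c"
proof (rule eq_vecI)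
  fix i assume "i < dim_vec ((c \<bullet> y) \<cdot>\<^sub>v c)"
  hence i: "i < m" using c by auto
  have "(outer c *\<^sub>v y) $ i = (\<Sum>j\<in>{0..<m}. c $ i * c $ j * y $ j)"
    using c y i by (simp add: outer_def row_def scalar_prod_def)
  also have "\<dots> = c $ i * (\<Sum>j\<in>{0..<m}. c $ j * y $ j)"
    by (simp add: sum_distrib_left mult.assoc)
  also have "\<dots> = ((c \<bullet> y) \<cdot>\<^sub>v c) $ i" using c y i by (simp add: scalar_prod_def)
  finally show "(outer c *\<^sub>v y) $ i = ((c \<bullet> y) \<cdot>\<^sub>v c) $ i" .
qed (use c y in \<open>auto simp: outer_def\<close>)

definition proj_prop :: "real mat \<Rightarrow> nat \<Rightarrow> real mat \<Rightarrow> bool" where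
  "proj_prop X k E \<longleftrightarrow> E \<in> carrier_mat (dim_row X) (dim_row X) \<and> transpose_mat E = E \<and> E * E = E \<and>
     (\<forall>j<k. j < dim_col X \<longrightarrow> E *\<^sub>v col X j = col X j) \<and>
     (\<forall>y\<in>carrier_vec (dim_row X). \<exists>z\<in>carrier_vec (dim_col X). E *\<^sub>v y = X *\<^sub>v z)"

lemma proj_step:
  fixes X :: "real mat"
  assumes X: "X \<in> carrier_mat m n" and k: "k < n" and P: "proj_prop X k E"
  shows "\<exists>E'. proj_prop X (Suc k) E'"
proof -
  from P X have E: "E \<in> carrier_mat m m" and sym: "transpose_mat E = E" and idem: "E * E = E"
    and fx0: "\<forall>j<k. j < n \<longrightarrow> E *\<^sub>v col X j = col X j"
    and rng: "\<And>y. y \<in> carrier_vec m \<Longrightarrow> \<exists>z\<in>carrier_vec n. E *\<^sub>v y = X *\<^sub>v z"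
    unfolding proj_prop_def by auto
  have fx: "E *\<^sub>v col X j = col X j" if "j < k" for j using fx0 that k by simp
  define w where "w = col X k"
  have w: "w \<in> carrier_vec m" using X k by (auto simp: w_def)
  define c where "c = w - E *\<^sub>v w"
  have c: "c \<in> carrier_vec m" using w E by (auto simp: c_def)
  have Ec: "E *\<^sub>v c = 0\<^sub>v m"
  proof -
    have "E *\<^sub>v c = E *\<^sub>v w - E *\<^sub>v (E *\<^sub>v w)" unfolding c_def
      using E w by (simp add: mult_minus_distrib_mat_vec)
    also have "E *\<^sub>v (E *\<^sub>v w) = E *\<^sub>v w"
      using assoc_mult_mat_vec[OF E E w, symmetric] idem by simp
    finally show ?thesis using E w by auto
  qed
  have cE: "c \<bullet> (E *\<^sub>v y) = 0" if y: "y \<in> carrier_vec m" for y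
  proof -
    have "c \<bullet> (E *\<^sub>v y) = (E *\<^sub>v c) \<bullet> y" using sym_mat_scalar[OF E sym y c] by simp
    thus ?thesis using Ec y by simp
  qed
  show ?thesis
  proof (cases "c = 0\<^sub>v m")
    case True
    have Ew: "E *\<^sub>v w = w"
    proof (rule eq_vecI)
      fix i assume "i < dim_vec w"
      hence i: "i < m" using w by auto
      have "c $ i = 0" using True i by simp
      thus "(E *\<^sub>v w) $ i = w $ i" using i w E unfolding c_def by simp
    qed (use E w in auto)
    have fxS: "\<forall>j<Suc k. j < n \<longrightarrow> E *\<^sub>v col X j = col X j"
      using fx Ew unfolding w_def less_Suc_eq by blast
    have "proj_prop X (Suc k) E" unfolding proj_prop_def using E sym idem fxS rng X by auto
    thus ?thesis by blast
  next
    case False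
    define cc where "cc = c \<bullet> c"
    have cc: "cc > 0" using self_scalar_pos[OF c False] cc_def by simp
    define E' where "E' = E + (1 / cc) \<cdot>\<^sub>m outer c"
    have E': "E' \<in> carrier_mat m m" using E c by (auto simp: E'_def)
    have E'v: "E' *\<^sub>v y = E *\<^sub>v y + ((c \<bullet> y) / cc) \<cdot>\<^sub>v c" if y: "y \<in> carrier_vec m" for y
    proof -
      have "E' *\<^sub>v y = E *\<^sub>v y + ((1 / cc) \<cdot>\<^sub>m outer c) *\<^sub>v y"
        unfolding E'_def using E c y by (simp add: add_mult_distrib_mat_vec)
      also have "((1 / cc) \<cdot>\<^sub>m outer c) *\<^sub>v y = (1/cc) \<cdot>\<^sub>v (outer c *\<^sub>v y)"
        using c y by (intro smult_mat_mult_mat_vec_assoc[OF outer_carrier[OF c]])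
      also have "\<dots> = ((c \<bullet> y) / cc) \<cdot>\<^sub>v c" using outer_mult[OF c y] by (simp add: smult_smult_assoc)
      finally show ?thesis .
    qed
    have symE': "transpose_mat E' = E'"
    proof (rule eq_matI)
      fix i j assume "i < dim_row E'" "j < dim_col E'"
      hence ij: "i < m" "j < m" using E' by auto
      have "E $$ (j,i) = E $$ (i,j)" using sym ij E by (metis carrier_matD index_transpose_mat(1))
      thus "transpose_mat E' $$ (i, j) = E' $$ (i, j)" using ij E c
        by (simp add: E'_def outer_def)
    qed (use E' in auto)
    have Ey: "E *\<^sub>v (E *\<^sub>v y) = E *\<^sub>v y" if y: "y \<in> carrier_vec m" for y
      using assoc_mult_mat_vec[OF E E y, symmetric] idem by simp
    have idemE': "E' * E' = E'"
    proof (rule mat_eq_by_vec[of _ m m])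
      show "E' * E' \<in> carrier_mat m m" using E' by auto
      fix y :: "real vec" assume y: "y \<in> carrier_vec m"
      define b where "b = (c \<bullet> y) / cc"
      have z: "E' *\<^sub>v y = E *\<^sub>v y + b \<cdot>\<^sub>v c" using E'v[OF y] b_def by simp
      have Ez: "E *\<^sub>v (E' *\<^sub>v y) = E *\<^sub>v y"
        unfolding z using E y c Ey[OF y] Ec
        by (simp add: mult_add_distrib_mat_vec mult_mat_vec, intro eq_vecI, auto)
      have cz: "c \<bullet> (E' *\<^sub>v y) = b * cc"
        unfolding z using E y c cE[OF y] cc_def
        by (simp add: scalar_prod_add_distrib[of _ m])
      have "(E' * E') *\<^sub>v y = E' *\<^sub>v (E' *\<^sub>v y)" using E' y by simp
      also have "\<dots> = E *\<^sub>v y + b \<cdot>\<^sub>v c"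
        using E'v[of "E' *\<^sub>v y"] E' y Ez cz cc by simp
      finally show "(E' * E') *\<^sub>v y = E' *\<^sub>v y" using z by simp
    qed (use E' in auto)
    have fixE': "E' *\<^sub>v col X j = col X j" if j: "j < Suc k" "j < n" for j
    proof -
      have colj: "col X j \<in> carrier_vec m" using X j by auto
      show ?thesis
      proof (cases "j < k")
        case True
        have "c \<bullet> col X j = c \<bullet> (E *\<^sub>v col X j)" using fx[OF True] by simp
        also have "\<dots> = 0" using cE[OF colj] .
        finally show ?thesis using E'v[OF colj] fx[OF True] colj c X by (simp, intro eq_vecI, auto)
      next
        case False
        hence jk: "j = k" using j by simp
        have cw: "c + E *\<^sub>v w = w" by (intro eq_vecI) (use w E in \<open>auto simp: c_def\<close>)
        have "c \<bullet> w = c \<bullet> (c + E *\<^sub>v w)" by (simp add: cw)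
        also have "\<dots> = cc + c \<bullet> (E *\<^sub>v w)" using c w E cc_def by (simp add: scalar_prod_add_distrib[of _ m])
        also have "\<dots> = cc" using cE[OF w] by simp
        finally have "c \<bullet> w = cc" .
        hence "E' *\<^sub>v w = E *\<^sub>v w + c" using E'v[OF w] cc by simp
        also have "\<dots> = w" unfolding c_def using E w by auto
        finally show ?thesis using jk w_def by simp
      qed
    qed
    have rngE': "\<exists>z\<in>carrier_vec n. E' *\<^sub>v y = X *\<^sub>v z" if y: "y \<in> carrier_vec m" for y
    proof -
      obtain z where z: "z \<in> carrier_vec n" "E *\<^sub>v y = X *\<^sub>v z" using rng[OF y] by blast
      obtain z0 where z0: "z0 \<in> carrier_vec n" "E *\<^sub>v w = X *\<^sub>v z0" using rng[OF w] by blast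
      have wX: "w = X *\<^sub>v unit_vec n k"
        unfolding w_def by (rule eq_vecI, insert X k, auto simp: mult_unit_index)
      define b where "b = (c \<bullet> y) / cc"
      have "E' *\<^sub>v y = X *\<^sub>v z + b \<cdot>\<^sub>v (X *\<^sub>v unit_vec n k - X *\<^sub>v z0)"
        using E'v[OF y] z z0 wX unfolding b_def c_def by simp
      also have "\<dots> = X *\<^sub>v (z + b \<cdot>\<^sub>v (unit_vec n k - z0))"
        using X z z0 by (simp add: mult_add_distrib_mat_vec mult_minus_distrib_mat_vec mult_mat_vec)
      finally show ?thesis using z z0 by (intro bexI[of _ "z + b \<cdot>\<^sub>v (unit_vec n k - z0)"]) auto
    qed
    have "proj_prop X (Suc k) E'" unfolding proj_prop_def using E' symE' idemE' fixE' rngE' X by auto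
    thus ?thesis by blast
  qed
qed

lemma proj_exists:
  fixes X :: "real mat"
  assumes X: "X \<in> carrier_mat m n"
  shows "\<exists>E. E \<in> carrier_mat m m \<and> transpose_mat E = E \<and> E * E = E \<and> E * X = X \<and>
     (\<forall>y\<in>carrier_vec m. \<exists>z\<in>carrier_vec n. E *\<^sub>v y = X *\<^sub>v z)"
proof -
  have "k \<le> n \<Longrightarrow> \<exists>E. proj_prop X k E" for k
  proof (induct k)
    case 0
    have "proj_prop X 0 (0\<^sub>m m m)" unfolding proj_prop_def using X
      by (auto intro!: bexI[of _ "0\<^sub>v n"])
    thus ?case by blast
  next
    case (Suc k)
    then obtain E where "proj_prop X k E" by auto
    from proj_step[OF X _ this] Suc(2) show ?case by auto
  qed
  then obtain E where P: "proj_prop X n E" by blast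
  hence E: "E \<in> carrier_mat m m" using X unfolding proj_prop_def by auto
  have "E * X = X"
  proof (rule eq_matI)
    fix i j assume ij: "i < dim_row X" "j < dim_col X"
    from P have fxall: "\<forall>j<n. j < dim_col X \<longrightarrow> E *\<^sub>v col X j = col X j" by (simp add: proj_prop_def)
    hence "E *\<^sub>v col X j = col X j" using ij X by auto
    hence "(E *\<^sub>v col X j) $ i = col X j $ i" by (rule arg_cong[where f = "\<lambda>v. v $ i"])
    moreover have "(E *\<^sub>v col X j) $ i = (E * X) $$ (i,j)" using E X ij by auto
    ultimately show "(E * X) $$ (i,j) = X $$ (i,j)" using ij by simp
  qed (use E X in auto)
  thus ?thesis using P X unfolding proj_prop_def by auto
qed


lemma mp_exists:
  fixes X :: "real mat"
  assumes X: "X \<in> carrier_mat m n"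
  shows "\<exists>Y. Y \<in> carrier_mat n m \<and> X * Y * X = X \<and> Y * X * Y = Y \<and>
      transpose_mat (X * Y) = X * Y \<and> transpose_mat (Y * X) = Y * X"
proof -
  obtain Ec where Ec: "Ec \<in> carrier_mat m m" and sEc: "transpose_mat Ec = Ec" and iEc: "Ec * Ec = Ec"
    and EcX: "Ec * X = X" and rEc: "\<forall>y\<in>carrier_vec m. \<exists>z\<in>carrier_vec n. Ec *\<^sub>v y = X *\<^sub>v z"
    using proj_exists[OF X] by blast
  have XT: "transpose_mat X \<in> carrier_mat n m" using X by auto
  obtain Er where Er: "Er \<in> carrier_mat n n" and sEr: "transpose_mat Er = Er" and iEr: "Er * Er = Er"
    and ErX: "Er * transpose_mat X = transpose_mat X"
    and rEr: "\<forall>y\<in>carrier_vec n. \<exists>z\<in>carrier_vec m. Er *\<^sub>v y = transpose_mat X *\<^sub>v z"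
    using proj_exists[OF XT] by blast
  define zf where "zf = (\<lambda>i. SOME z. z \<in> carrier_vec n \<and> Ec *\<^sub>v unit_vec m i = X *\<^sub>v z)"
  have zf: "zf i \<in> carrier_vec n \<and> Ec *\<^sub>v unit_vec m i = X *\<^sub>v zf i" for i
  proof -
    have "\<exists>z. z \<in> carrier_vec n \<and> Ec *\<^sub>v unit_vec m i = X *\<^sub>v z" using rEc by auto
    thus ?thesis unfolding zf_def by (rule someI_ex)
  qed
  define Z where "Z = mat n m (\<lambda>(j,i). zf i $ j)"
  have Z: "Z \<in> carrier_mat n m" by (simp add: Z_def)
  have colZ: "col Z i = zf i" if "i < m" for i
    using zf[of i] that by (intro eq_vecI, auto simp: Z_def)
  have XZ: "X * Z = Ec"
  proof (rule eq_matI)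
    fix k i assume ki: "k < dim_row Ec" "i < dim_col Ec"
    hence k: "k < m" and i: "i < m" using Ec by auto
    have "(X * Z) $$ (k,i) = (X *\<^sub>v col Z i) $ k" using X Z k i by auto
    also have "\<dots> = (Ec *\<^sub>v unit_vec m i) $ k" using colZ[OF i] zf[of i] by simp
    also have "\<dots> = Ec $$ (k,i)" using mult_unit_index[OF Ec k i] .
    finally show "(X * Z) $$ (k,i) = Ec $$ (k,i)" .
  qed (use X Z Ec in auto)
  have XEr: "X * Er = X"
  proof -
    have "transpose_mat (Er * transpose_mat X) = X * transpose_mat Er"
      using transpose_mult[OF Er XT] by simp
    thus ?thesis using ErX sEr by simp
  qed
  define Y where "Y = Er * Z"
  have Y: "Y \<in> carrier_mat n m" using Er Z by (simp add: Y_def)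
  have XY: "X * Y = Ec" unfolding Y_def using assoc_mult_mat[OF X Er Z] XEr XZ by simp
  have YX: "Y * X = Er"
  proof (rule mat_eq_by_vec[of _ n n])
    show "Y * X \<in> carrier_mat n n" using Y X by auto
    fix x :: "real vec" assume x: "x \<in> carrier_vec n"
    define d where "d = Z *\<^sub>v (X *\<^sub>v x) - x"
    have d: "d \<in> carrier_vec n" using Z X x by (simp add: d_def)
    have Xd: "X *\<^sub>v d = 0\<^sub>v m"
    proof -
      have "X *\<^sub>v (Z *\<^sub>v (X *\<^sub>v x)) = (X * Z) *\<^sub>v (X *\<^sub>v x)" using X Z x by simp
      also have "\<dots> = (Ec * X) *\<^sub>v x" using XZ Ec X x by simp
      also have "\<dots> = X *\<^sub>v x" using EcX by simp
      finally show ?thesis unfolding d_def using X Z x by (simp add: mult_minus_distrib_mat_vec)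
    qed
    have Erd: "Er *\<^sub>v d = 0\<^sub>v n"
    proof (rule ccontr)
      assume nz: "Er *\<^sub>v d \<noteq> 0\<^sub>v n"
      obtain z where z: "z \<in> carrier_vec m" "Er *\<^sub>v d = transpose_mat X *\<^sub>v z" using rEr d by blast
      have "(Er *\<^sub>v d) \<bullet> (Er *\<^sub>v d) = d \<bullet> (Er *\<^sub>v (Er *\<^sub>v d))"
        using sym_mat_scalar[OF Er sEr, of "Er *\<^sub>v d" d] Er d by simp
      also have "Er *\<^sub>v (Er *\<^sub>v d) = Er *\<^sub>v d" using assoc_mult_mat_vec[OF Er Er d, symmetric] iEr by simp
      also have "d \<bullet> (Er *\<^sub>v d) = d \<bullet> (transpose_mat X *\<^sub>v z)" using z by simp
      also have "\<dots> = (transpose_mat (transpose_mat X) *\<^sub>v d) \<bullet> z"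
        using transpose_vec_mult_scalar[OF XT z(1) d] by simp
      also have "\<dots> = 0" using Xd z by simp
      finally show False using self_scalar_pos[OF _ nz] Er d by auto
    qed
    have "(Y * X) *\<^sub>v x = Er *\<^sub>v (Z *\<^sub>v (X *\<^sub>v x))" unfolding Y_def
      using assoc_mult_mat_vec[OF mult_carrier_mat[OF Er Z] X x] assoc_mult_mat_vec[OF Er Z mult_mat_vec_carrier[OF X x]] by simp
    also have "Z *\<^sub>v (X *\<^sub>v x) = x + d" unfolding d_def by (intro eq_vecI) (use Z X x in auto)
    also have "Er *\<^sub>v (x + d) = Er *\<^sub>v x" using Er x d Erd by (simp add: mult_add_distrib_mat_vec)
    finally show "(Y * X) *\<^sub>v x = Er *\<^sub>v x" .
  qed (use Er in auto)
  have "X * Y * X = X" using XY EcX by simp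
  moreover have "Y * X * Y = Y"
  proof -
    have "Y * X * Y = Er * (Er * Z)" using YX unfolding Y_def by simp
    also have "\<dots> = (Er * Er) * Z" using assoc_mult_mat[OF Er Er Z] by simp
    finally show ?thesis using iEr Y_def by simp
  qed
  ultimately show ?thesis using Y XY YX sEc sEr by blast
qed

lemma mp_unique:
  fixes X Y1 Y2 :: "real mat"
  assumes X: "X \<in> carrier_mat m n" and Y1: "Y1 \<in> carrier_mat n m" and Y2: "Y2 \<in> carrier_mat n m"
    and a1: "X * Y1 * X = X" "Y1 * X * Y1 = Y1" "transpose_mat (X * Y1) = X * Y1" "transpose_mat (Y1 * X) = Y1 * X"
    and a2: "X * Y2 * X = X" "Y2 * X * Y2 = Y2" "transpose_mat (X * Y2) = X * Y2" "transpose_mat (Y2 * X) = Y2 * X"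
  shows "Y1 = Y2"
proof -
  note tm = transpose_mult
  have XT: "transpose_mat X \<in> carrier_mat n m" using X by auto
  have Y1T: "transpose_mat Y1 \<in> carrier_mat m n" using Y1 by auto
  have Y2T: "transpose_mat Y2 \<in> carrier_mat m n" using Y2 by auto
  have XY1: "X * Y1 \<in> carrier_mat m m" using X Y1 by auto
  have XY2: "X * Y2 \<in> carrier_mat m m" using X Y2 by auto
  have Y1X: "Y1 * X \<in> carrier_mat n n" using X Y1 by auto
  have Y2X: "Y2 * X \<in> carrier_mat n n" using X Y2 by auto
  have Y2TXT: "transpose_mat Y2 * transpose_mat X \<in> carrier_mat m m" using Y2T XT by auto
  have XTY2T: "transpose_mat X * transpose_mat Y2 \<in> carrier_mat n n" using Y2T XT by auto
  have XTe: "transpose_mat X = transpose_mat X * (transpose_mat Y2 * transpose_mat X)"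
  proof -
    have "transpose_mat X = transpose_mat (X * Y2 * X)" using a2(1) by simp
    also have "\<dots> = transpose_mat X * transpose_mat (X * Y2)" using tm[OF XY2 X] .
    also have "transpose_mat (X * Y2) = transpose_mat Y2 * transpose_mat X" using tm[OF X Y2] .
    finally show ?thesis .
  qed
  have A: "X * Y1 = X * Y2"
  proof -
    have "X * Y1 = transpose_mat (X * Y1)" using a1(3) by simp
    also have "\<dots> = transpose_mat Y1 * transpose_mat X" using tm[OF X Y1] .
    also have "\<dots> = transpose_mat Y1 * (transpose_mat X * (transpose_mat Y2 * transpose_mat X))"
      using XTe by simp
    also have "\<dots> = (transpose_mat Y1 * transpose_mat X) * (transpose_mat Y2 * transpose_mat X)"
      using assoc_mult_mat[OF Y1T XT Y2TXT] by simp
    also have "\<dots> = transpose_mat (X * Y1) * transpose_mat (X * Y2)" using tm[OF X Y1] tm[OF X Y2] by simp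
    also have "\<dots> = (X * Y1) * (X * Y2)" using a1(3) a2(3) by simp
    also have "\<dots> = ((X * Y1) * X) * Y2" using assoc_mult_mat[OF XY1 X Y2] by simp
    also have "\<dots> = X * Y2" using a1(1) by simp
    finally show ?thesis .
  qed
  have B: "Y1 * X = Y2 * X"
  proof -
    have XTe2: "transpose_mat X = (transpose_mat X * transpose_mat Y2) * transpose_mat X"
      using XTe assoc_mult_mat[OF XT Y2T XT] by simp
    have "Y1 * X = transpose_mat (Y1 * X)" using a1(4) by simp
    also have "\<dots> = transpose_mat X * transpose_mat Y1" using tm[OF Y1 X] .
    also have "\<dots> = ((transpose_mat X * transpose_mat Y2) * transpose_mat X) * transpose_mat Y1"
      using XTe2 by simp
    also have "\<dots> = (transpose_mat X * transpose_mat Y2) * (transpose_mat X * transpose_mat Y1)"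
      using assoc_mult_mat[OF XTY2T XT Y1T] by simp
    also have "\<dots> = transpose_mat (Y2 * X) * transpose_mat (Y1 * X)" using tm[OF Y1 X] tm[OF Y2 X] by simp
    also have "\<dots> = (Y2 * X) * (Y1 * X)" using a1(4) a2(4) by simp
    also have "\<dots> = Y2 * (X * (Y1 * X))" using assoc_mult_mat[OF Y2 X Y1X] by simp
    also have "X * (Y1 * X) = X * Y1 * X" using assoc_mult_mat[OF X Y1 X] by simp
    also have "\<dots> = X" using a1(1) .
    finally show ?thesis .
  qed
  have "Y1 = Y1 * X * Y1" using a1(2) by simp
  also have "\<dots> = Y1 * (X * Y1)" using assoc_mult_mat[OF Y1 X Y1] .
  also have "\<dots> = Y1 * (X * Y2)" using A by simp
  also have "\<dots> = (Y1 * X) * Y2" using assoc_mult_mat[OF Y1 X Y2] by simp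
  also have "\<dots> = (Y2 * X) * Y2" using B by simp
  also have "\<dots> = Y2" using a2(2) by simp
  finally show ?thesis .
qed

lemma mp_props:
  fixes X :: "real mat"
  assumes X: "X \<in> carrier_mat m n"
  shows "mp_inverse X \<in> carrier_mat n m \<and> X * mp_inverse X * X = X \<and>
    mp_inverse X * X * mp_inverse X = mp_inverse X \<and>
    transpose_mat (X * mp_inverse X) = X * mp_inverse X \<and>
    transpose_mat (mp_inverse X * X) = mp_inverse X * X"
proof -
  let ?P = "\<lambda>Y. Y \<in> carrier_mat (dim_col X) (dim_row X) \<and>
      X * Y * X = X \<and> Y * X * Y = Y \<and>
      transpose_mat (X * Y) = X * Y \<and> transpose_mat (Y * X) = Y * X"
  have dims: "dim_col X = n" "dim_row X = m" using X by auto
  have "\<exists>!Y. ?P Y"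
  proof -
    obtain Y where "Y \<in> carrier_mat n m \<and> X * Y * X = X \<and> Y * X * Y = Y \<and>
      transpose_mat (X * Y) = X * Y \<and> transpose_mat (Y * X) = Y * X" using mp_exists[OF X] by blast
    hence "?P Y" using dims by simp
    moreover have "Y' = Y" if "?P Y'" "?P Y" for Y'
      using mp_unique[OF X, of Y' Y] that dims by simp
    ultimately show ?thesis by blast
  qed
  hence "?P (mp_inverse X)" unfolding mp_inverse_def by (rule theI')
  thus ?thesis using dims by simp
qed



lemma vec_cmod_carrier: "vec n (\<lambda>i. cmod (v $ i)) \<in> carrier_vec n" by simp

lemma core_eig:
  fixes F G T :: "real mat" and v :: "complex vec" and l :: complex
  assumes F: "F \<in> carrier_mat n n" and G: "G \<in> carrier_mat n n" and T: "T \<in> carrier_mat n n"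
    and FGT: "F = G + T" and symF: "transpose_mat F = F" and idF: "F * F = F" and FT: "F * T = T"
    and Gnn: "\<And>i j. i < n \<Longrightarrow> j < n \<Longrightarrow> G $$ (i,j) \<ge> 0"
    and Tnn: "\<And>i j. i < n \<Longrightarrow> j < n \<Longrightarrow> T $$ (i,j) \<ge> 0"
    and ev: "eigenvector (map_mat complex_of_real T) v l" and l0: "l \<noteq> 0"
  shows "\<exists>u \<in> carrier_vec n. (\<forall>i<n. u $ i \<ge> 0) \<and> u \<noteq> 0\<^sub>v n \<and> F *\<^sub>v u = u \<and>
     (\<forall>i<n. (T *\<^sub>v u) $ i \<ge> cmod l * u $ i) \<and> (\<forall>i<n. (G *\<^sub>v u) $ i \<ge> cmod (1 - l) * u $ i)"
proof -
  let ?c = "map_mat complex_of_real"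
  have Tc: "?c T \<in> carrier_mat n n" and Fc: "?c F \<in> carrier_mat n n" and Gc: "?c G \<in> carrier_mat n n"
    using T F G by auto
  from ev T have v: "v \<in> carrier_vec n" and vnz: "v \<noteq> 0\<^sub>v n" and Tv: "?c T *\<^sub>v v = l \<cdot>\<^sub>v v"
    unfolding eigenvector_def by auto
  have FcTc: "?c F * ?c T = ?c T" using of_real_hom.mat_hom_mult[OF F T] FT by metis
  have Fv: "?c F *\<^sub>v v = v"
  proof -
    have "l \<cdot>\<^sub>v (?c F *\<^sub>v v) = ?c F *\<^sub>v (l \<cdot>\<^sub>v v)" using mult_mat_vec[OF Fc v] by simp
    also have "\<dots> = ?c F *\<^sub>v (?c T *\<^sub>v v)" using Tv by simp
    also have "\<dots> = (?c F * ?c T) *\<^sub>v v" using Fc Tc v by simp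
    also have "\<dots> = l \<cdot>\<^sub>v v" using FcTc Tv by simp
    finally have eq: "l \<cdot>\<^sub>v (?c F *\<^sub>v v) = l \<cdot>\<^sub>v v" .
    show ?thesis
    proof (rule eq_vecI)
      fix i assume "i < dim_vec v"
      hence i: "i < n" using v by auto
      have "l * (?c F *\<^sub>v v) $ i = l * v $ i"
        using arg_cong[OF eq, of "\<lambda>x. x $ i"] i v Fc by simp
      thus "(?c F *\<^sub>v v) $ i = v $ i" using l0 by simp
    qed (use Fc v in auto)
  qed
  have rowsum: "(?c M *\<^sub>v v) $ i = (\<Sum>j\<in>{0..<n}. complex_of_real (M $$ (i,j)) * v $ j)"
    if M: "M \<in> carrier_mat n n" and i: "i < n" for M i
    using M i v by (simp add: scalar_prod_def row_def)
  have Gv: "(?c G *\<^sub>v v) $ i = (1 - l) * v $ i" if i: "i < n" for i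
  proof -
    have "(?c F *\<^sub>v v) $ i = (\<Sum>j\<in>{0..<n}. complex_of_real (G $$ (i,j)) * v $ j) +
        (\<Sum>j\<in>{0..<n}. complex_of_real (T $$ (i,j)) * v $ j)"
    proof -
      have e: "F $$ (i,j) = G $$ (i,j) + T $$ (i,j)" if "j < n" for j
        using that i G T unfolding FGT by simp
      have "(?c F *\<^sub>v v) $ i = (\<Sum>j\<in>{0..<n}. complex_of_real (G $$ (i,j)) * v $ j +
          complex_of_real (T $$ (i,j)) * v $ j)"
        unfolding rowsum[OF F i] by (intro sum.cong refl, simp add: e distrib_right)
      thus ?thesis by (simp add: sum.distrib)
    qed
    hence "(?c G *\<^sub>v v) $ i = (?c F *\<^sub>v v) $ i - (?c T *\<^sub>v v) $ i"
      using rowsum[OF G i] rowsum[OF T i] by simp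
    thus ?thesis using Fv Tv i v by (simp add: algebra_simps)
  qed
  define u where "u = vec n (\<lambda>i. cmod (v $ i))"
  have u: "u \<in> carrier_vec n" by (simp add: u_def)
  have unn: "\<forall>i<n. u $ i \<ge> 0" by (simp add: u_def)
  have bound: "cmod ((?c M *\<^sub>v v) $ i) \<le> (M *\<^sub>v u) $ i"
    if M: "M \<in> carrier_mat n n" and Mnn: "\<And>i j. i < n \<Longrightarrow> j < n \<Longrightarrow> M $$ (i,j) \<ge> 0" and i: "i < n" for M i
  proof -
    have "cmod ((?c M *\<^sub>v v) $ i) \<le> (\<Sum>j\<in>{0..<n}. cmod (complex_of_real (M $$ (i,j)) * v $ j))"
      unfolding rowsum[OF M i] by (rule norm_sum)
    also have "\<dots> = (\<Sum>j\<in>{0..<n}. M $$ (i,j) * u $ j)"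
      using Mnn i by (intro sum.cong, auto simp: u_def norm_mult)
    also have "\<dots> = (M *\<^sub>v u) $ i" using M i u by (simp add: scalar_prod_def row_def)
    finally show ?thesis .
  qed
  have Tu: "\<forall>i<n. (T *\<^sub>v u) $ i \<ge> cmod l * u $ i"
  proof (intro allI impI)
    fix i assume i: "i < n"
    have "cmod l * u $ i = cmod ((?c T *\<^sub>v v) $ i)" using Tv i v by (simp add: u_def norm_mult)
    also have "\<dots> \<le> (T *\<^sub>v u) $ i" by (rule bound[OF T Tnn i])
    finally show "(T *\<^sub>v u) $ i \<ge> cmod l * u $ i" .
  qed
  have Gu: "\<forall>i<n. (G *\<^sub>v u) $ i \<ge> cmod (1 - l) * u $ i"
  proof (intro allI impI)
    fix i assume i: "i < n"
    have "cmod (1 - l) * u $ i = cmod ((?c G *\<^sub>v v) $ i)" using Gv[OF i] i v by (simp add: u_def norm_mult)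
    also have "\<dots> \<le> (G *\<^sub>v u) $ i" by (rule bound[OF G Gnn i])
    finally show "(G *\<^sub>v u) $ i \<ge> cmod (1 - l) * u $ i" .
  qed
  have Fu_sum: "(F *\<^sub>v u) $ i = (G *\<^sub>v u) $ i + (T *\<^sub>v u) $ i" if i: "i < n" for i
    unfolding FGT using G T u i by (simp add: add_mult_distrib_mat_vec)
  have tri: "1 \<le> cmod l + cmod (1 - l)"
    using norm_triangle_ineq[of l "1 - l"] by simp
  have Fuge: "(F *\<^sub>v u) $ i \<ge> u $ i" if i: "i < n" for i
  proof -
    have "1 * u $ i \<le> (cmod l + cmod (1 - l)) * u $ i"
      by (rule mult_right_mono[OF tri]) (use unn i in auto)
    hence "u $ i \<le> (cmod l + cmod (1 - l)) * u $ i" by simp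
    also have "\<dots> = cmod l * u $ i + cmod (1 - l) * u $ i" by (simp add: algebra_simps)
    also have "\<dots> \<le> (F *\<^sub>v u) $ i" using Fu_sum[OF i] Tu[rule_format, OF i] Gu[rule_format, OF i] by linarith
    finally show ?thesis .
  qed
  define w where "w = F *\<^sub>v u"
  have w: "w \<in> carrier_vec n" using F u by (simp add: w_def)
  have ww: "w \<bullet> w = u \<bullet> w"
  proof -
    have "w \<bullet> w = u \<bullet> (F *\<^sub>v w)" unfolding w_def using sym_mat_scalar[OF F symF mult_mat_vec_carrier[OF F u] u] .
    also have "F *\<^sub>v w = w" unfolding w_def using assoc_mult_mat_vec[OF F F u, symmetric] idF by simp
    finally show ?thesis .
  qed
  have Fu: "F *\<^sub>v u = u"
  proof -
    have "(\<Sum>i\<in>{0..<n}. (w $ i - u $ i) * w $ i) = w \<bullet> w - u \<bullet> w"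
      unfolding scalar_prod_def using w u by (simp add: sum_subtractf left_diff_distrib)
    also have "\<dots> = 0" using ww by simp
    finally have s0: "(\<Sum>i\<in>{0..<n}. (w $ i - u $ i) * w $ i) = 0" .
    have nn: "\<forall>i\<in>{0..<n}. (w $ i - u $ i) * w $ i \<ge> 0"
    proof
      fix i assume "i \<in> {0..<n}"
      hence i: "i < n" by simp
      have a: "u $ i \<le> w $ i" "0 \<le> u $ i" using Fuge[OF i] unn i w_def by auto
      show "(w $ i - u $ i) * w $ i \<ge> 0" by (rule mult_nonneg_nonneg) (use a in auto)
    qed
    have z: "\<forall>i\<in>{0..<n}. (w $ i - u $ i) * w $ i = 0"
      using sum_nonneg_eq_0_iff[of "{0..<n}" "\<lambda>i. (w $ i - u $ i) * w $ i"] s0 nn by auto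
    show ?thesis
    proof (rule eq_vecI)
      fix i assume "i < dim_vec u"
      hence i: "i < n" using u by auto
      have a: "w $ i - u $ i \<ge> 0" "u $ i \<ge> 0" using Fuge[OF i] unn i unfolding w_def by auto
      have "(w $ i - u $ i) * w $ i = 0" using z i by auto
      moreover have "(w $ i - u $ i) * (w $ i - u $ i) \<le> (w $ i - u $ i) * w $ i"
        using a by (intro mult_left_mono) auto
      ultimately have "(w $ i - u $ i) * (w $ i - u $ i) \<le> 0" by linarith
      hence "w $ i - u $ i = 0" by (smt (verit) not_real_square_gt_zero)
      thus "(F *\<^sub>v u) $ i = u $ i" unfolding w_def by simp
    qed (use F u in auto)
  qed
  have unz: "u \<noteq> 0\<^sub>v n"
  proof
    assume "u = 0\<^sub>v n"
    hence "\<forall>i<n. v $ i = 0" unfolding u_def by (metis index_vec index_zero_vec(1) norm_eq_zero)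
    hence "v = 0\<^sub>v n" using v by (intro eq_vecI) auto
    thus False using vnz by simp
  qed
  show ?thesis using u unn unz Fu Tu Gu by blast
qed



lemma mat_vec_sum:
  fixes M :: "real mat"
  assumes M: "M \<in> carrier_mat n n" and x: "x \<in> carrier_vec n" and i: "i < n"
  shows "(M *\<^sub>v x) $ i = (\<Sum>j\<in>{0..<n}. M $$ (i,j) * x $ j)"
  using M x i by (simp add: scalar_prod_def row_def)

lemma mono_scaled:
  fixes M :: "real mat"
  assumes M: "M \<in> carrier_mat n n" and Mnn: "\<And>i j. i < n \<Longrightarrow> j < n \<Longrightarrow> M $$ (i,j) \<ge> 0"
    and x: "x \<in> carrier_vec n" and y: "y \<in> carrier_vec n"
    and le: "\<And>j. j < n \<Longrightarrow> q * x $ j \<le> y $ j" and i: "i < n"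
  shows "q * (M *\<^sub>v x) $ i \<le> (M *\<^sub>v y) $ i"
proof -
  have "q * (M *\<^sub>v x) $ i = (\<Sum>j\<in>{0..<n}. M $$ (i,j) * (q * x $ j))"
    unfolding mat_vec_sum[OF M x i] by (simp add: sum_distrib_left algebra_simps)
  also have "\<dots> \<le> (\<Sum>j\<in>{0..<n}. M $$ (i,j) * y $ j)"
    by (rule sum_mono, rule mult_left_mono, insert le Mnn i, auto)
  also have "\<dots> = (M *\<^sub>v y) $ i" using mat_vec_sum[OF M y i] by simp
  finally show ?thesis .
qed

lemma pow_growth:
  fixes M :: "real mat"
  assumes M: "M \<in> carrier_mat n n" and Mnn: "\<And>i j. i < n \<Longrightarrow> j < n \<Longrightarrow> M $$ (i,j) \<ge> 0"
    and q: "q \<ge> 0"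
  shows "\<And>x. x \<in> carrier_vec n \<Longrightarrow> (\<forall>j<n. x $ j \<ge> 0) \<Longrightarrow> (\<forall>j<n. q * x $ j \<le> (M *\<^sub>v x) $ j) \<Longrightarrow>
     \<forall>j<n. q ^ k * x $ j \<le> (M ^\<^sub>m k *\<^sub>v x) $ j"
proof (induct k)
  case 0
  thus ?case using M by auto
next
  case (Suc k)
  fix x :: "real vec"
  assume x: "x \<in> carrier_vec n" and xnn: "\<forall>j<n. x $ j \<ge> 0" and Mx: "\<forall>j<n. q * x $ j \<le> (M *\<^sub>v x) $ j"
  define y where "y = M *\<^sub>v x"
  have y: "y \<in> carrier_vec n" using M x by (simp add: y_def)
  have ynn: "\<forall>j<n. y $ j \<ge> 0"
    using mono_scaled[OF M Mnn x x, of 0] xnn unfolding y_def by auto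
  have My: "\<forall>j<n. q * y $ j \<le> (M *\<^sub>v y) $ j"
    using mono_scaled[OF M Mnn x y, of q] Mx unfolding y_def by auto
  have IH: "\<forall>j<n. q ^ k * y $ j \<le> (M ^\<^sub>m k *\<^sub>v y) $ j" using Suc(1)[OF y ynn My] .
  have Mk: "M ^\<^sub>m k \<in> carrier_mat n n" using M by simp
  show "\<forall>j<n. q ^ Suc k * x $ j \<le> (M ^\<^sub>m Suc k *\<^sub>v x) $ j"
  proof (intro allI impI)
    fix j assume j: "j < n"
    have "(M ^\<^sub>m Suc k *\<^sub>v x) = M ^\<^sub>m k *\<^sub>v y" using assoc_mult_mat_vec[OF Mk M x] by (simp add: y_def)
    moreover have "q ^ k * y $ j \<le> (M ^\<^sub>m k *\<^sub>v y) $ j" using IH j by auto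
    moreover have "q ^ k * (q * x $ j) \<le> q ^ k * y $ j"
      using Mx j q unfolding y_def by (simp add: mult_left_mono)
    ultimately show "q ^ Suc k * x $ j \<le> (M ^\<^sub>m Suc k *\<^sub>v x) $ j"
      by (simp add: mult.assoc mult.left_commute)
  qed
qed

lemma rho_nonneg:
  fixes T :: "real mat"
  assumes T: "T \<in> carrier_mat n n" and n: "n > 0"
  shows "rho T \<ge> 0"
proof -
  have Tc: "map_mat complex_of_real T \<in> carrier_mat n n" using T by auto
  from spectral_radius_mem_max(1)[OF Tc n] show ?thesis unfolding rho_def by auto
qed

lemma cw:
  fixes T :: "real mat" and u :: "real vec" and r :: real
  assumes T: "T \<in> carrier_mat n n" and Tnn: "\<And>i j. i < n \<Longrightarrow> j < n \<Longrightarrow> T $$ (i,j) \<ge> 0"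
    and u: "u \<in> carrier_vec n" and unn: "\<forall>j<n. u $ j \<ge> 0" and unz: "u \<noteq> 0\<^sub>v n"
    and Tu: "\<forall>j<n. r * u $ j \<le> (T *\<^sub>v u) $ j" and n: "n > 0"
  shows "r \<le> rho T"
proof (rule ccontr)
  assume "\<not> r \<le> rho T"
  hence lt: "rho T < r" by simp
  let ?Tc = "map_mat complex_of_real T"
  have Tc: "?Tc \<in> carrier_mat n n" using T by auto
  have r0: "rho T \<ge> 0" by (rule rho_nonneg[OF T n])
  define s where "s = (rho T + r) / 2"
  have s: "s > 0" "rho T < s" "s < r" using lt r0 unfolding s_def by auto
  define M where "M = (1 / s) \<cdot>\<^sub>m T"
  have M: "M \<in> carrier_mat n n" using T by (simp add: M_def)
  have Mnn: "M $$ (i,j) \<ge> 0" if "i < n" "j < n" for i j using Tnn[OF that] s T that by (simp add: M_def)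
  let ?Mc = "map_mat complex_of_real M"
  have Mc: "?Mc \<in> carrier_mat n n" using M by auto
  have srM: "spectral_radius ?Mc < 1"
  proof -
    obtain mu where mu: "mu \<in> spectrum ?Mc" and nm: "spectral_radius ?Mc = norm mu"
      using spectral_radius_mem_max(1)[OF Mc n] by auto
    from mu obtain w where ew: "eigenvector ?Mc w mu" unfolding spectrum_def eigenvalue_def by auto
    hence w: "w \<in> carrier_vec n" and wnz: "w \<noteq> 0\<^sub>v n" and Mw: "?Mc *\<^sub>v w = mu \<cdot>\<^sub>v w"
      unfolding eigenvector_def using Mc by auto
    have Tw: "?Tc *\<^sub>v w = (complex_of_real s * mu) \<cdot>\<^sub>v w"
    proof (rule eq_vecI)
      fix i assume "i < dim_vec ((complex_of_real s * mu) \<cdot>\<^sub>v w)"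
      hence i: "i < n" using w by auto
      have "(?Mc *\<^sub>v w) $ i = (\<Sum>j\<in>{0..<n}. complex_of_real (M $$ (i,j)) * w $ j)"
        using M w i by (simp add: scalar_prod_def row_def)
      also have "\<dots> = complex_of_real (1/s) * (\<Sum>j\<in>{0..<n}. complex_of_real (T $$ (i,j)) * w $ j)"
        unfolding sum_distrib_left by (intro sum.cong refl, insert T i, auto simp: M_def)
      also have "(\<Sum>j\<in>{0..<n}. complex_of_real (T $$ (i,j)) * w $ j) = (?Tc *\<^sub>v w) $ i"
        using T w i by (simp add: scalar_prod_def row_def)
      finally have "mu * w $ i = complex_of_real (1/s) * (?Tc *\<^sub>v w) $ i" using Mw i w by simp
      hence "(?Tc *\<^sub>v w) $ i = complex_of_real s * mu * w $ i" using s
        by (simp add: field_simps of_real_def)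
      thus "(?Tc *\<^sub>v w) $ i = ((complex_of_real s * mu) \<cdot>\<^sub>v w) $ i" using i w by simp
    qed (use T w in auto)
    have "eigenvector ?Tc w (complex_of_real s * mu)" unfolding eigenvector_def using Tw w wnz Tc by auto
    hence "complex_of_real s * mu \<in> spectrum ?Tc" unfolding spectrum_def eigenvalue_def by auto
    from spectral_radius_mem_max(2)[OF Tc n, OF imageI[OF this]]
    have "norm (complex_of_real s * mu) \<le> rho T" unfolding rho_def .
    hence "s * norm mu \<le> rho T" using s by (simp add: norm_mult)
    hence "s * norm mu < s" using s by linarith
    hence "norm mu < 1" using s(1) by (metis mult_less_cancel_left_pos mult.right_neutral)
    thus ?thesis using nm by simp
  qed
  obtain c where c: "\<And>k. norm_bound (?Mc ^\<^sub>m k) c"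
    using spectral_radius_jnf_norm_bound_less_1_upper_triangular[OF Mc srM] by auto
  have Mkb: "\<bar>(M ^\<^sub>m k) $$ (i,j)\<bar> \<le> c" if "i < n" "j < n" for k i j
  proof -
    have "?Mc ^\<^sub>m k = map_mat complex_of_real (M ^\<^sub>m k)" using of_real_hom.mat_hom_pow[OF M] by metis
    moreover have "M ^\<^sub>m k \<in> carrier_mat n n" using M by simp
    ultimately show ?thesis using c[of k] that M unfolding norm_bound_def by auto
  qed
  define q where "q = r / s"
  have q: "q > 1" "q \<ge> 0" using s unfolding q_def by auto
  have Mu: "\<forall>j<n. q * u $ j \<le> (M *\<^sub>v u) $ j"
  proof (intro allI impI)
    fix j assume j: "j < n"
    have "(M *\<^sub>v u) $ j = (1/s) * (T *\<^sub>v u) $ j"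
      unfolding M_def using smult_mat_mult_mat_vec_assoc[OF T u, of "1/s"] j u T by simp
    moreover have "(1/s) * (r * u $ j) \<le> (1/s) * (T *\<^sub>v u) $ j"
      using Tu j s by (intro mult_left_mono) auto
    ultimately show "q * u $ j \<le> (M *\<^sub>v u) $ j" unfolding q_def by simp
  qed
  have grow: "\<forall>j<n. q ^ k * u $ j \<le> (M ^\<^sub>m k *\<^sub>v u) $ j" for k
    using pow_growth[OF M Mnn q(2) u unn Mu] .
  from unz u obtain i where i: "i < n" and ui: "u $ i \<noteq> 0" by (auto simp: vec_eq_iff)
  have uip: "u $ i > 0" using ui unn i by force
  define S where "S = (\<Sum>j\<in>{0..<n}. u $ j)"
  have ub: "(M ^\<^sub>m k *\<^sub>v u) $ i \<le> c * S" for k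
  proof -
    have Mk: "M ^\<^sub>m k \<in> carrier_mat n n" using M by simp
    have "(M ^\<^sub>m k *\<^sub>v u) $ i = (\<Sum>j\<in>{0..<n}. (M ^\<^sub>m k) $$ (i,j) * u $ j)"
      by (rule mat_vec_sum[OF Mk u i])
    also have "\<dots> \<le> (\<Sum>j\<in>{0..<n}. c * u $ j)"
    proof (rule sum_mono)
      fix j assume "j \<in> {0..<n}"
      hence j: "j < n" by simp
      have "(M ^\<^sub>m k) $$ (i,j) \<le> c" using Mkb[OF i j, of k] by linarith
      thus "(M ^\<^sub>m k) $$ (i,j) * u $ j \<le> c * u $ j" using unn j by (intro mult_right_mono) auto
    qed
    also have "\<dots> = c * S" unfolding S_def by (simp add: sum_distrib_left)
    finally show ?thesis .
  qed
  obtain k where k: "c * S / u $ i < q ^ k" using real_arch_pow[OF q(1)] by blast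
  have "q ^ k * u $ i \<le> c * S" using grow[of k] ub[of k] i by force
  hence "q ^ k \<le> c * S / u $ i" using uip by (simp add: field_simps)
  with k show False by simp
qed

lemma proj_eq:
  fixes F1 F2 :: "real mat"
  assumes F1: "F1 \<in> carrier_mat n n" and F2: "F2 \<in> carrier_mat n n"
    and s1: "transpose_mat F1 = F1" and s2: "transpose_mat F2 = F2"
    and i1: "F1 * F1 = F1" and i2: "F2 * F2 = F2"
    and nul: "\<And>x. x \<in> carrier_vec n \<Longrightarrow> F1 *\<^sub>v x = 0\<^sub>v n \<longleftrightarrow> F2 *\<^sub>v x = 0\<^sub>v n"
  shows "F1 = F2"
proof -
  have gen: "A * B = A" if A: "A \<in> carrier_mat n n" and B: "B \<in> carrier_mat n n" and iB: "B * B = B"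
    and nl: "\<And>x. x \<in> carrier_vec n \<Longrightarrow> B *\<^sub>v x = 0\<^sub>v n \<Longrightarrow> A *\<^sub>v x = 0\<^sub>v n" for A B :: "real mat"
  proof (rule mat_eq_by_vec[of _ n n])
    show "A * B \<in> carrier_mat n n" using A B by auto
    fix x :: "real vec" assume x: "x \<in> carrier_vec n"
    define y where "y = x - B *\<^sub>v x"
    have y: "y \<in> carrier_vec n" using x B by (simp add: y_def)
    have "B *\<^sub>v y = B *\<^sub>v x - B *\<^sub>v (B *\<^sub>v x)" unfolding y_def using B x by (simp add: mult_minus_distrib_mat_vec)
    also have "B *\<^sub>v (B *\<^sub>v x) = B *\<^sub>v x" using assoc_mult_mat_vec[OF B B x, symmetric] iB by simp
    finally have "B *\<^sub>v y = 0\<^sub>v n" using B x by simp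
    hence Ay: "A *\<^sub>v y = 0\<^sub>v n" using nl[OF y] by simp
    have Ay2: "A *\<^sub>v y = A *\<^sub>v x - A *\<^sub>v (B *\<^sub>v x)" unfolding y_def using A B x by (simp add: mult_minus_distrib_mat_vec)
    have "A *\<^sub>v (B *\<^sub>v x) = A *\<^sub>v x"
    proof (rule eq_vecI)
      fix i assume "i < dim_vec (A *\<^sub>v x)"
      hence i: "i < n" using A by auto
      have "(A *\<^sub>v y) $ i = 0" using Ay i by simp
      moreover have "(A *\<^sub>v y) $ i = (A *\<^sub>v x) $ i - (A *\<^sub>v (B *\<^sub>v x)) $ i"
        using arg_cong[OF Ay2, of "\<lambda>v. v $ i"] i A B x by simp
      ultimately show "(A *\<^sub>v (B *\<^sub>v x)) $ i = (A *\<^sub>v x) $ i" by simp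
    qed (use A B x in auto)
    thus "(A * B) *\<^sub>v x = A *\<^sub>v x" using A B x by simp
  qed (use A in auto)
  have e1: "F1 * F2 = F1" by (rule gen[OF F1 F2 i2], insert nul, auto)
  have e2: "F2 * F1 = F2" by (rule gen[OF F2 F1 i1], insert nul, auto)
  have "F1 = transpose_mat (F1 * F2)" using e1 s1 by simp
  also have "\<dots> = transpose_mat F2 * transpose_mat F1" using transpose_mult[OF F1 F2] .
  also have "\<dots> = F2" using s1 s2 e2 by simp
  finally show ?thesis .
qed



lemma mat_vec_sum2:
  fixes M :: "real mat"
  assumes M: "M \<in> carrier_mat a b" and x: "x \<in> carrier_vec b" and i: "i < a"
  shows "(M *\<^sub>v x) $ i = (\<Sum>j\<in>{0..<b}. M $$ (i,j) * x $ j)"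
  using M x i by (simp add: scalar_prod_def row_def)

lemma mat_vec_zero[simp]:
  fixes M :: "real mat"
  assumes "M \<in> carrier_mat a b"
  shows "M *\<^sub>v 0\<^sub>v b = 0\<^sub>v a"
  using assms by (intro eq_vecI) (auto simp: scalar_prod_def)

lemma prod_nonneg:
  fixes X Y :: "real mat"
  assumes X: "X \<in> carrier_mat a b" and Y: "Y \<in> carrier_mat b c"
    and Xn: "\<And>i j. i < a \<Longrightarrow> j < b \<Longrightarrow> X $$ (i,j) \<ge> 0"
    and Yn: "\<And>i j. i < b \<Longrightarrow> j < c \<Longrightarrow> Y $$ (i,j) \<ge> 0"
    and i: "i < a" and j: "j < c"
  shows "(X * Y) $$ (i,j) \<ge> 0"
proof -
  have "(X * Y) $$ (i,j) = (\<Sum>k\<in>{0..<b}. X $$ (i,k) * Y $$ (k,j))"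
    using X Y i j by (simp add: scalar_prod_def row_def col_def)
  also have "\<dots> \<ge> 0" by (rule sum_nonneg, rule mult_nonneg_nonneg, insert Xn Yn i j, auto)
  finally show ?thesis .
qed

lemma vec_nonneg:
  fixes X :: "real mat"
  assumes X: "X \<in> carrier_mat a b" and x: "x \<in> carrier_vec b"
    and Xn: "\<And>i j. i < a \<Longrightarrow> j < b \<Longrightarrow> X $$ (i,j) \<ge> 0"
    and xn: "\<And>j. j < b \<Longrightarrow> x $ j \<ge> 0" and i: "i < a"
  shows "(X *\<^sub>v x) $ i \<ge> 0"
  unfolding mat_vec_sum2[OF X x i] by (rule sum_nonneg, rule mult_nonneg_nonneg, insert Xn xn i, auto)

lemma nonnegD:
  assumes "mat_nonneg X" "X \<in> carrier_mat a b" "i < a" "j < b"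
  shows "X $$ (i,j) \<ge> 0"
  using assms unfolding mat_nonneg_def by auto

lemma pspl_facts:
  fixes A U V :: "real mat"
  assumes A: "A \<in> carrier_mat m n" and ps: "proper_splitting A U V"
  defines "Q \<equiv> mp_inverse U"
  shows "U \<in> carrier_mat m n" "V \<in> carrier_mat m n" "Q \<in> carrier_mat n m"
    "Q * U = Q * A + Q * V" "transpose_mat (Q * U) = Q * U" "(Q * U) * (Q * U) = Q * U"
    "(Q * U) * (Q * V) = Q * V"
    "\<And>x. x \<in> carrier_vec n \<Longrightarrow> (Q * U) *\<^sub>v x = 0\<^sub>v n \<longleftrightarrow> A *\<^sub>v x = 0\<^sub>v m"
    "\<And>x. x \<in> carrier_vec n \<Longrightarrow> U *\<^sub>v (Q *\<^sub>v (A *\<^sub>v x)) = A *\<^sub>v x"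
proof -
  from ps A have U: "U \<in> carrier_mat m n" and V: "V \<in> carrier_mat m n" and AUV: "A = U - V"
    and rng: "range_mat U = range_mat A" and nul: "null_mat U = null_mat A"
    unfolding proper_splitting_def by auto
  show "U \<in> carrier_mat m n" "V \<in> carrier_mat m n" by fact+
  from mp_props[OF U] have Q: "Q \<in> carrier_mat n m" and UQU: "U * Q * U = U" and QUQ: "Q * U * Q = Q"
    and sQU: "transpose_mat (Q * U) = Q * U" unfolding Q_def by auto
  show "Q \<in> carrier_mat n m" by fact
  show "transpose_mat (Q * U) = Q * U" by fact
  have UAV: "U = A + V" using AUV U V A by (intro eq_matI) auto
  show "Q * U = Q * A + Q * V" unfolding UAV using Q A V by (simp add: mult_add_distrib_mat)
  show "(Q * U) * (Q * U) = Q * U"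
  proof -
    have "(Q * U) * (Q * U) = (Q * U * Q) * U" using assoc_mult_mat[OF mult_carrier_mat[OF Q U] Q U] by simp
    thus ?thesis using QUQ by simp
  qed
  show "(Q * U) * (Q * V) = Q * V"
  proof -
    have "(Q * U) * (Q * V) = (Q * U * Q) * V" using assoc_mult_mat[OF mult_carrier_mat[OF Q U] Q V] by simp
    thus ?thesis using QUQ by simp
  qed
  fix x :: "real vec" assume x: "x \<in> carrier_vec n"
  have Ux: "U *\<^sub>v x = 0\<^sub>v m \<longleftrightarrow> A *\<^sub>v x = 0\<^sub>v m"
  proof -
    have "U *\<^sub>v x = 0\<^sub>v m \<longleftrightarrow> x \<in> null_mat U" using U x unfolding null_mat_def by auto
    also have "\<dots> \<longleftrightarrow> x \<in> null_mat A" using nul by simp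
    also have "\<dots> \<longleftrightarrow> A *\<^sub>v x = 0\<^sub>v m" using A x unfolding null_mat_def by auto
    finally show ?thesis .
  qed
  have "(Q * U) *\<^sub>v x = 0\<^sub>v n \<longleftrightarrow> U *\<^sub>v x = 0\<^sub>v m"
  proof
    assume h: "(Q * U) *\<^sub>v x = 0\<^sub>v n"
    have "U *\<^sub>v x = (U * Q * U) *\<^sub>v x" using UQU by simp
    also have "\<dots> = U *\<^sub>v ((Q * U) *\<^sub>v x)"
      using assoc_mult_mat[OF U Q U] assoc_mult_mat_vec[OF U mult_carrier_mat[OF Q U] x] by simp
    also have "\<dots> = 0\<^sub>v m" using h mat_vec_zero[OF U] by simp
    finally show "U *\<^sub>v x = 0\<^sub>v m" .
  next
    assume h: "U *\<^sub>v x = 0\<^sub>v m"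
    have "(Q * U) *\<^sub>v x = Q *\<^sub>v (U *\<^sub>v x)" using Q U x by simp
    thus "(Q * U) *\<^sub>v x = 0\<^sub>v n" using h mat_vec_zero[OF Q] by simp
  qed
  thus "(Q * U) *\<^sub>v x = 0\<^sub>v n \<longleftrightarrow> A *\<^sub>v x = 0\<^sub>v m" using Ux by simp
  have "A *\<^sub>v x \<in> range_mat A" using A x unfolding range_mat_def by auto
  hence "A *\<^sub>v x \<in> range_mat U" using rng by simp
  then obtain y where y: "y \<in> carrier_vec n" "A *\<^sub>v x = U *\<^sub>v y" using U unfolding range_mat_def by auto
  have "U *\<^sub>v (Q *\<^sub>v (U *\<^sub>v y)) = (U * Q * U) *\<^sub>v y"
    using assoc_mult_mat_vec[OF mult_carrier_mat[OF U Q] U y(1)] assoc_mult_mat_vec[OF U Q mult_mat_vec_carrier[OF U y(1)]] by simp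
  also have "\<dots> = U *\<^sub>v y" using UQU by simp
  finally show "U *\<^sub>v (Q *\<^sub>v (A *\<^sub>v x)) = A *\<^sub>v x" using y by simp
qed



theorem theorem3p9:
  fixes A B C U V :: "real mat" and m n :: nat
  assumes "A \<in> carrier_mat m n"
    and "mat_nonneg (mp_inverse A)"
    and "proper_weak_regular_splitting A B C"
    and "proper_regular_splitting A U V"
    and "mat_nonneg A"
    and "mat_geq (mp_inverse B) (mp_inverse U)"
  shows "rho (mp_inverse B * C) \<le> rho (mp_inverse U * V) \<and> rho (mp_inverse U * V) < 1"
proof -
  note assms' = assms
  have A: "A \<in> carrier_mat m n" by fact
  from assms(5) A obtain i0 j0 where "i0 < m" "j0 < n" unfolding mat_nonneg_def by auto
  hence m0: "m > 0" and n0: "n > 0" by auto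
  from assms(3) have psB: "proper_splitting A B C" and Pnn0: "mat_nonneg (mp_inverse B)"
    and Snn0: "mat_nonneg (mp_inverse B * C)" unfolding proper_weak_regular_splitting_def by auto
  from assms(4) have psU: "proper_splitting A U V" and Qnn0: "mat_nonneg (mp_inverse U)"
    and Vnn0: "mat_nonneg V" unfolding proper_regular_splitting_def by auto
  define P where "P = mp_inverse B"
  define Q where "Q = mp_inverse U"
  note fB = pspl_facts[OF A psB, folded P_def]
  note fU = pspl_facts[OF A psU, folded Q_def]
  have B: "B \<in> carrier_mat m n" and C: "C \<in> carrier_mat m n" and P: "P \<in> carrier_mat n m"
    using fB by auto
  have U: "U \<in> carrier_mat m n" and V: "V \<in> carrier_mat m n" and Q: "Q \<in> carrier_mat n m"
    using fU by auto
  define F where "F = Q * U"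
  define FB where "FB = P * B"
  define T where "T = Q * V"
  define S where "S = P * C"
  define GQ where "GQ = Q * A"
  define GP where "GP = P * A"
  have F: "F \<in> carrier_mat n n" and FB: "FB \<in> carrier_mat n n" and T: "T \<in> carrier_mat n n"
    and S: "S \<in> carrier_mat n n" and GQ: "GQ \<in> carrier_mat n n" and GP: "GP \<in> carrier_mat n n"
    using P Q A B C U V by (auto simp: F_def FB_def T_def S_def GQ_def GP_def)
  have Ann: "\<And>i j. i < m \<Longrightarrow> j < n \<Longrightarrow> A $$ (i,j) \<ge> 0" using nonnegD[OF assms(5) A] .
  have Qnn: "\<And>i j. i < n \<Longrightarrow> j < m \<Longrightarrow> Q $$ (i,j) \<ge> 0" using nonnegD[OF Qnn0[folded Q_def] Q] .
  have Pnn: "\<And>i j. i < n \<Longrightarrow> j < m \<Longrightarrow> P $$ (i,j) \<ge> 0" using nonnegD[OF Pnn0[folded P_def] P] .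
  have Vnn: "\<And>i j. i < m \<Longrightarrow> j < n \<Longrightarrow> V $$ (i,j) \<ge> 0" using nonnegD[OF Vnn0 V] .
  have Snn: "\<And>i j. i < n \<Longrightarrow> j < n \<Longrightarrow> S $$ (i,j) \<ge> 0"
    using nonnegD[OF Snn0[folded P_def] S[unfolded S_def]] unfolding S_def .
  have Tnn: "\<And>i j. i < n \<Longrightarrow> j < n \<Longrightarrow> T $$ (i,j) \<ge> 0"
    unfolding T_def by (rule prod_nonneg[OF Q V Qnn Vnn])
  have GQnn: "\<And>i j. i < n \<Longrightarrow> j < n \<Longrightarrow> GQ $$ (i,j) \<ge> 0"
    unfolding GQ_def by (rule prod_nonneg[OF Q A Qnn Ann])
  have GPnn: "\<And>i j. i < n \<Longrightarrow> j < n \<Longrightarrow> GP $$ (i,j) \<ge> 0"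
    unfolding GP_def by (rule prod_nonneg[OF P A Pnn Ann])
  have PQ: "\<And>i j. i < n \<Longrightarrow> j < m \<Longrightarrow> Q $$ (i,j) \<le> P $$ (i,j)"
  proof -
    fix i j assume ij: "i < n" "j < m"
    have PQc: "P - Q \<in> carrier_mat n m" by (rule minus_carrier_mat[OF Q])
    have "(P - Q) $$ (i,j) \<ge> 0" using nonnegD[OF assms(6)[unfolded mat_geq_def, folded P_def Q_def] PQc ij] .
    thus "Q $$ (i,j) \<le> P $$ (i,j)" using P Q ij by simp
  qed
  have FGT: "F = GQ + T" unfolding F_def GQ_def T_def using fU by simp
  have FBGS: "FB = GP + S" unfolding FB_def GP_def S_def using fB by simp
  have symF: "transpose_mat F = F" unfolding F_def using fU by simp
  have symFB: "transpose_mat FB = FB" unfolding FB_def using fB by simp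
  have idF: "F * F = F" unfolding F_def using fU by simp
  have idFB: "FB * FB = FB" unfolding FB_def using fB by simp
  have FT: "F * T = T" unfolding F_def T_def using fU by simp
  have FBS: "FB * S = S" unfolding FB_def S_def using fB by simp
  have FFB: "F = FB"
    by (rule proj_eq[OF F FB symF symFB idF idFB], unfold F_def FB_def, insert fU(8) fB(8), blast)
  let ?Tc = "map_mat complex_of_real T"
  let ?Sc = "map_mat complex_of_real S"
  have Tc: "?Tc \<in> carrier_mat n n" and Sc: "?Sc \<in> carrier_mat n n" using T S by auto
  have part1: "rho T < 1"
  proof -
    obtain l where l: "l \<in> spectrum ?Tc" and rl: "rho T = cmod l"
      using spectral_radius_mem_max(1)[OF Tc n0] unfolding rho_def by auto
    show ?thesis
    proof (cases "l = 0")
      case True thus ?thesis using rl by simp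
    next
      case False
      from l obtain v where ev: "eigenvector ?Tc v l" unfolding spectrum_def eigenvalue_def by auto
      from core_eig[OF F GQ T FGT symF idF FT GQnn Tnn ev False]
      obtain u where u: "u \<in> carrier_vec n" and unn: "\<forall>i<n. u $ i \<ge> 0" and unz: "u \<noteq> 0\<^sub>v n"
        and Fu: "F *\<^sub>v u = u" and Tu: "\<forall>i<n. (T *\<^sub>v u) $ i \<ge> cmod l * u $ i"
        and Gu: "\<forall>i<n. (GQ *\<^sub>v u) $ i \<ge> cmod (1 - l) * u $ i" by blast
      have Fsum: "u $ i = (GQ *\<^sub>v u) $ i + (T *\<^sub>v u) $ i" if i: "i < n" for i
      proof -
        have "u $ i = (F *\<^sub>v u) $ i" using Fu by simp
        also have "\<dots> = (GQ *\<^sub>v u) $ i + (T *\<^sub>v u) $ i" unfolding FGT using GQ T u i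
          by (simp add: add_mult_distrib_mat_vec)
        finally show ?thesis .
      qed
      show ?thesis
      proof (rule ccontr)
        assume "\<not> rho T < 1"
        hence l1: "cmod l \<ge> 1" using rl by simp
        from unz u obtain i where i: "i < n" and ui: "u $ i \<noteq> 0" by (auto simp: vec_eq_iff)
        have uip: "u $ i > 0" using ui unn i by force
        have "u $ i \<ge> cmod (1 - l) * u $ i + cmod l * u $ i"
          using Fsum[OF i] Tu Gu i by force
        moreover have "cmod l * u $ i \<ge> u $ i" using l1 uip by simp
        ultimately have "cmod (1 - l) * u $ i \<le> 0" by linarith
        hence "cmod (1 - l) = 0" using uip by (smt (verit) mult_pos_pos norm_ge_zero)
        hence l_1: "l = 1" by simp
        have GQu0: "GQ *\<^sub>v u = 0\<^sub>v n"
        proof (rule eq_vecI)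
          fix j assume "j < dim_vec (0\<^sub>v n :: real vec)"
          hence j: "j < n" by simp
          have "(T *\<^sub>v u) $ j \<ge> u $ j" using Tu j l_1 by simp
          moreover have "(GQ *\<^sub>v u) $ j \<ge> 0" using Gu j l_1 by simp
          ultimately show "(GQ *\<^sub>v u) $ j = 0\<^sub>v n $ j" using Fsum[OF j] j by simp
        qed (use GQ in auto)
        have "Q *\<^sub>v (A *\<^sub>v u) = 0\<^sub>v n" using GQu0 unfolding GQ_def using Q A u by simp
        hence "A *\<^sub>v u = U *\<^sub>v 0\<^sub>v n" using fU(9)[OF u] by simp
        hence "A *\<^sub>v u = 0\<^sub>v m" using mat_vec_zero[OF U] by simp
        hence "F *\<^sub>v u = 0\<^sub>v n" using fU(8)[OF u] unfolding F_def by simp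
        thus False using Fu unz by simp
      qed
    qed
  qed
  have part2: "rho S \<le> rho T"
  proof -
    obtain l where l: "l \<in> spectrum ?Sc" and rl: "rho S = cmod l"
      using spectral_radius_mem_max(1)[OF Sc n0] unfolding rho_def by auto
    show ?thesis
    proof (cases "l = 0")
      case True thus ?thesis using rl rho_nonneg[OF T n0] by simp
    next
      case False
      from l obtain v where ev: "eigenvector ?Sc v l" unfolding spectrum_def eigenvalue_def by auto
      from core_eig[OF FB GP S FBGS symFB idFB FBS GPnn Snn ev False]
      obtain u where u: "u \<in> carrier_vec n" and unn: "\<forall>i<n. u $ i \<ge> 0" and unz: "u \<noteq> 0\<^sub>v n"
        and Fu: "FB *\<^sub>v u = u" and Su: "\<forall>i<n. (S *\<^sub>v u) $ i \<ge> cmod l * u $ i" by blast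
      have Au: "A *\<^sub>v u \<in> carrier_vec m" using A u by simp
      have Aunn: "\<And>k. k < m \<Longrightarrow> (A *\<^sub>v u) $ k \<ge> 0"
        using vec_nonneg[OF A u Ann] unn by auto
      have Tu: "\<forall>j<n. cmod l * u $ j \<le> (T *\<^sub>v u) $ j"
      proof (intro allI impI)
        fix j assume j: "j < n"
        have "(GQ *\<^sub>v u) $ j \<le> (GP *\<^sub>v u) $ j"
        proof -
          have "(GQ *\<^sub>v u) $ j = (Q *\<^sub>v (A *\<^sub>v u)) $ j" unfolding GQ_def using Q A u by simp
          also have "\<dots> = (\<Sum>k\<in>{0..<m}. Q $$ (j,k) * (A *\<^sub>v u) $ k)" by (rule mat_vec_sum2[OF Q Au j])
          also have "\<dots> \<le> (\<Sum>k\<in>{0..<m}. P $$ (j,k) * (A *\<^sub>v u) $ k)"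
            by (rule sum_mono, rule mult_right_mono, insert PQ Aunn j, auto)
          also have "\<dots> = (P *\<^sub>v (A *\<^sub>v u)) $ j" by (rule mat_vec_sum2[OF P Au j, symmetric])
          also have "\<dots> = (GP *\<^sub>v u) $ j" unfolding GP_def using P A u by simp
          finally show ?thesis .
        qed
        moreover have "u $ j = (GQ *\<^sub>v u) $ j + (T *\<^sub>v u) $ j"
        proof -
          have "u $ j = (F *\<^sub>v u) $ j" using Fu FFB by simp
          also have "\<dots> = (GQ *\<^sub>v u) $ j + (T *\<^sub>v u) $ j" unfolding FGT using GQ T u j
            by (simp add: add_mult_distrib_mat_vec)
          finally show ?thesis .
        qed
        moreover have "u $ j = (GP *\<^sub>v u) $ j + (S *\<^sub>v u) $ j"
        proof -
          have "u $ j = (FB *\<^sub>v u) $ j" using Fu by simp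
          also have "\<dots> = (GP *\<^sub>v u) $ j + (S *\<^sub>v u) $ j" unfolding FBGS using GP S u j
            by (simp add: add_mult_distrib_mat_vec)
          finally show ?thesis .
        qed
        moreover have "(S *\<^sub>v u) $ j \<ge> cmod l * u $ j" using Su j by simp
        ultimately show "cmod l * u $ j \<le> (T *\<^sub>v u) $ j" by linarith
      qed
      from cw[OF T Tnn u unn unz Tu n0] show ?thesis using rl by simp
    qed
  qed
  show ?thesis using part1 part2 unfolding S_def T_def P_def Q_def by simp
qed

end
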